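(* Let $E$ be a pseudo effect algebra satisfying (RDP) and let $s_1,s_2\in\mathcal S(E)$. Then $s_1\wedge s_2\in\mathcal S(E)$ if and only if $s_1=s_2$, if and only if $s_1\vee s_2\in\mathcal S(E)$ (lattice operations taken in $\mathcal J(E)$). Moreover, putting $s_\lambda:=\lambda s_1+(1-\lambda)s_2$ for $\lambda\in[0,1]$, we have $s_1\wedge s_2=\bigwedge\{s_\lambda:\lambda\in[0,1]\}$ (infimum in $\mathcal J(E)$), and this is a measure on $E$.
   Context: Pseudo effect algebra: partial algebra $(E;+,0,1)$ such that for all $a,b,c$: (i) $a+b$ and $(a+b)+c$ exist iff $b+c$ and $a+(b+c)$ exist, and then they are equal; (ii) there is exactly one $d$ and one $e$ with $a+d=e+a=1$; (iii) if $a+b$ exists there are $d,e$ with $a+b=d+a=b+e$; (iv) if $1+a$ or $a+1$ exists then $a=0$. (RDP): whenever $a_1+a_2=b_1+b_2$ there are $d_1,\dots,d_4$ with $d_1+d_2=a_1$, $d_3+d_4=a_2$, $d_1+d_3=b_1$, $d_2+d_4=b_2$. Signed measure: $m:E\to\mathbb R$ additive on defined sums; measure: nonnegative signed measure; state: measure with $s(1)=1$; $\mathcal S(E)$: set of states. $\mathcal J(E)$: signed measures that are differences of two measures, ordered by $m_1\le^+m_2$ iff $m_2-m_1$ is a measure; under (RDP) it is a Dedekind complete lattice-ordered group. *)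

theory Defs
  imports Main "HOL-Library.Lattice_Algebras"
begin

text \<open>A pseudo effect algebra is given by a carrier set E, a partial operation
  add (None = undefined), and constants z (zero) and u (one).\<close>

definition pea :: "'a set \<Rightarrow> ('a \<Rightarrow> 'a \<Rightarrow> 'a option) \<Rightarrow> 'a \<Rightarrow> 'a \<Rightarrow> bool" where
  "pea E add z u \<longleftrightarrow>
     z \<in> E \<and> u \<in> E \<and>
     (\<forall>a\<in>E. \<forall>b\<in>E. \<forall>c. add a b = Some c \<longrightarrow> c \<in> E) \<and>
     (\<forall>a\<in>E. \<forall>b\<in>E. \<forall>c\<in>E.
        ((\<exists>x. add a b = Some x \<and> add x c \<noteq> None) \<longleftrightarrow>
         (\<exists>y. add b c = Some y \<and> add a y \<noteq> None)) \<and>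
        (\<forall>x y. add a b = Some x \<and> add b c = Some y \<and> add x c \<noteq> None
                \<longrightarrow> add x c = add a y)) \<and>
     (\<forall>a\<in>E. (\<exists>!d. d \<in> E \<and> add a d = Some u) \<and> (\<exists>!e. e \<in> E \<and> add e a = Some u)) \<and>
     (\<forall>a\<in>E. \<forall>b\<in>E. \<forall>x. add a b = Some x \<longrightarrow>
        (\<exists>d\<in>E. \<exists>e\<in>E. add d a = Some x \<and> add b e = Some x)) \<and>
     (\<forall>a\<in>E. add u a \<noteq> None \<or> add a u \<noteq> None \<longrightarrow> a = z)"

definition RDP :: "'a set \<Rightarrow> ('a \<Rightarrow> 'a \<Rightarrow> 'a option) \<Rightarrow> bool" where
  "RDP E add \<longleftrightarrow>
     (\<forall>a1\<in>E. \<forall>a2\<in>E. \<forall>b1\<in>E. \<forall>b2\<in>E.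
        add a1 a2 \<noteq> None \<and> add a1 a2 = add b1 b2 \<longrightarrow>
        (\<exists>d1\<in>E. \<exists>d2\<in>E. \<exists>d3\<in>E. \<exists>d4\<in>E.
           add d1 d2 = Some a1 \<and> add d3 d4 = Some a2 \<and>
           add d1 d3 = Some b1 \<and> add d2 d4 = Some b2))"

definition signed_measure :: "'a set \<Rightarrow> ('a \<Rightarrow> 'a \<Rightarrow> 'a option) \<Rightarrow> ('a \<Rightarrow> real) \<Rightarrow> bool" where
  "signed_measure E add m \<longleftrightarrow>
     (\<forall>a\<in>E. \<forall>b\<in>E. \<forall>c. add a b = Some c \<longrightarrow> m c = m a + m b)"

definition pea_measure :: "'a set \<Rightarrow> ('a \<Rightarrow> 'a \<Rightarrow> 'a option) \<Rightarrow> ('a \<Rightarrow> real) \<Rightarrow> bool" where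
  "pea_measure E add m \<longleftrightarrow> signed_measure E add m \<and> (\<forall>a\<in>E. 0 \<le> m a)"

definition pea_state :: "'a set \<Rightarrow> ('a \<Rightarrow> 'a \<Rightarrow> 'a option) \<Rightarrow> 'a \<Rightarrow> ('a \<Rightarrow> real) \<Rightarrow> bool" where
  "pea_state E add u m \<longleftrightarrow> pea_measure E add m \<and> m u = 1"

definition JE :: "'a set \<Rightarrow> ('a \<Rightarrow> 'a \<Rightarrow> 'a option) \<Rightarrow> ('a \<Rightarrow> real) set" where
  "JE E add = {m. signed_measure E add m \<and>
      (\<exists>m1 m2. pea_measure E add m1 \<and> pea_measure E add m2 \<and> (\<forall>a\<in>E. m a = m1 a - m2 a))}"

definition leJ :: "'a set \<Rightarrow> ('a \<Rightarrow> 'a \<Rightarrow> 'a option) \<Rightarrow> ('a \<Rightarrow> real) \<Rightarrow> ('a \<Rightarrow> real) \<Rightarrow> bool" where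
  "leJ E add m1 m2 \<longleftrightarrow> pea_measure E add (\<lambda>a. m2 a - m1 a)"

definition is_infJ :: "'a set \<Rightarrow> ('a \<Rightarrow> 'a \<Rightarrow> 'a option) \<Rightarrow> ('a \<Rightarrow> real) \<Rightarrow> ('a \<Rightarrow> real) set \<Rightarrow> bool" where
  "is_infJ E add m S \<longleftrightarrow> m \<in> JE E add \<and> (\<forall>k\<in>S. leJ E add m k) \<and>
     (\<forall>k\<in>JE E add. (\<forall>s\<in>S. leJ E add k s) \<longrightarrow> leJ E add k m)"

definition is_supJ :: "'a set \<Rightarrow> ('a \<Rightarrow> 'a \<Rightarrow> 'a option) \<Rightarrow> ('a \<Rightarrow> real) \<Rightarrow> ('a \<Rightarrow> real) set \<Rightarrow> bool" where
  "is_supJ E add m S \<longleftrightarrow> m \<in> JE E add \<and> (\<forall>k\<in>S. leJ E add k m) \<and>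
     (\<forall>k\<in>JE E add. (\<forall>s\<in>S. leJ E add s k) \<longrightarrow> leJ E add m k)"

definition meetJ :: "'a set \<Rightarrow> ('a \<Rightarrow> 'a \<Rightarrow> 'a option) \<Rightarrow> ('a \<Rightarrow> real) \<Rightarrow> ('a \<Rightarrow> real) \<Rightarrow> ('a \<Rightarrow> real)" where
  "meetJ E add s1 s2 = (SOME m. is_infJ E add m {s1, s2})"

definition joinJ :: "'a set \<Rightarrow> ('a \<Rightarrow> 'a \<Rightarrow> 'a option) \<Rightarrow> ('a \<Rightarrow> real) \<Rightarrow> ('a \<Rightarrow> real) \<Rightarrow> ('a \<Rightarrow> real)" where
  "joinJ E add s1 s2 = (SOME m. is_supJ E add m {s1, s2})"

end

theory Submission imports Defs begin

lemma pea_ax: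
  assumes "pea E add z u"
  shows pea_zE: "z \<in> E" and pea_uE: "u \<in> E"
   and pea_cl: "\<forall>a\<in>E. \<forall>b\<in>E. \<forall>c. add a b = Some c \<longrightarrow> c \<in> E"
   and pea_as: "\<forall>a\<in>E. \<forall>b\<in>E. \<forall>c\<in>E.
        ((\<exists>x. add a b = Some x \<and> add x c \<noteq> None) \<longleftrightarrow>
         (\<exists>y. add b c = Some y \<and> add a y \<noteq> None)) \<and>
        (\<forall>x y. add a b = Some x \<and> add b c = Some y \<and> add x c \<noteq> None
                \<longrightarrow> add x c = add a y)"
   and pea_cp: "\<forall>a\<in>E. (\<exists>!d. d \<in> E \<and> add a d = Some u) \<and> (\<exists>!e. e \<in> E \<and> add e a = Some u)"
   and pea_c3: "\<forall>a\<in>E. \<forall>b\<in>E. \<forall>x. add a b = Some x \<longrightarrow>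
        (\<exists>d\<in>E. \<exists>e\<in>E. add d a = Some x \<and> add b e = Some x)"
   and pea_un: "\<forall>a\<in>E. add u a \<noteq> None \<or> add a u \<noteq> None \<longrightarrow> a = z"
proof -
  note h = assms[unfolded pea_def]
  show "z \<in> E" using h by (rule conjunct1)
  show "u \<in> E" using conjunct2[OF h] by (rule conjunct1)
  show "\<forall>a\<in>E. \<forall>b\<in>E. \<forall>c. add a b = Some c \<longrightarrow> c \<in> E" using conjunct2[OF conjunct2[OF h]] by (rule conjunct1)
  note h3 = conjunct2[OF conjunct2[OF conjunct2[OF h]]]
  show "\<forall>a\<in>E. \<forall>b\<in>E. \<forall>c\<in>E.
        ((\<exists>x. add a b = Some x \<and> add x c \<noteq> None) \<longleftrightarrow>
         (\<exists>y. add b c = Some y \<and> add a y \<noteq> None)) \<and>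
        (\<forall>x y. add a b = Some x \<and> add b c = Some y \<and> add x c \<noteq> None
                \<longrightarrow> add x c = add a y)" using h3 by (rule conjunct1)
  note h4 = conjunct2[OF h3]
  show "\<forall>a\<in>E. (\<exists>!d. d \<in> E \<and> add a d = Some u) \<and> (\<exists>!e. e \<in> E \<and> add e a = Some u)" using h4 by (rule conjunct1)
  note h5 = conjunct2[OF h4]
  show "\<forall>a\<in>E. \<forall>b\<in>E. \<forall>x. add a b = Some x \<longrightarrow>
        (\<exists>d\<in>E. \<exists>e\<in>E. add d a = Some x \<and> add b e = Some x)" using h5 by (rule conjunct1)
  show "\<forall>a\<in>E. add u a \<noteq> None \<or> add a u \<noteq> None \<longrightarrow> a = z" using h5 by (rule conjunct2)
qed

lemma pea_closed: "pea E add z u \<Longrightarrow> a\<in>E \<Longrightarrow> b\<in>E \<Longrightarrow> add a b = Some c \<Longrightarrow> c\<in>E"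
  by (drule pea_cl) blast

lemma pea_assoc1:
  assumes p: "pea E add z u" and "a\<in>E" "b\<in>E" "c\<in>E" "add a b = Some x" "add x c = Some w"
  shows "\<exists>y. add b c = Some y \<and> add a y = Some w"
proof -
  have ax: "((\<exists>x. add a b = Some x \<and> add x c \<noteq> None) \<longleftrightarrow>
         (\<exists>y. add b c = Some y \<and> add a y \<noteq> None)) \<and>
        (\<forall>x y. add a b = Some x \<and> add b c = Some y \<and> add x c \<noteq> None
                \<longrightarrow> add x c = add a y)" using pea_as[OF p] assms(2-4) by blast
  then obtain y where "add b c = Some y" using assms by auto
  then show ?thesis using ax assms by (metis option.distinct(1))
qed

lemma pea_assoc2:
  assumes p: "pea E add z u" and "a\<in>E" "b\<in>E" "c\<in>E" "add b c = Some y" "add a y = Some w"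
  shows "\<exists>x. add a b = Some x \<and> add x c = Some w"
proof -
  have ax: "((\<exists>x. add a b = Some x \<and> add x c \<noteq> None) \<longleftrightarrow>
         (\<exists>y. add b c = Some y \<and> add a y \<noteq> None)) \<and>
        (\<forall>x y. add a b = Some x \<and> add b c = Some y \<and> add x c \<noteq> None
                \<longrightarrow> add x c = add a y)" using pea_as[OF p] assms(2-4) by blast
  then obtain x where "add a b = Some x" "add x c \<noteq> None" using assms by auto
  then show ?thesis using ax assms by metis
qed

lemma pea_comm3:
  assumes p: "pea E add z u" and "a\<in>E" "b\<in>E" "add a b = Some x"
  shows "\<exists>d\<in>E. add d a = Some x"
  using pea_c3[OF p] assms(2-4) by blast

lemma pea_uz:
  assumes p: "pea E add z u"
  shows "add u z = Some u" "add z u = Some u"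
proof -
  have uE: "u \<in> E" using pea_uE[OF p] .
  obtain d where "d\<in>E" "add u d = Some u" using pea_cp[OF p] uE by blast
  moreover then have "d = z" using pea_un[OF p] by blast
  ultimately show "add u z = Some u" by simp
  obtain e where "e\<in>E" "add e u = Some u" using pea_cp[OF p] uE by blast
  moreover then have "e = z" using pea_un[OF p] by blast
  ultimately show "add z u = Some u" by simp
qed

lemma pea_rneutral:
  assumes p: "pea E add z u" and a: "a\<in>E"
  shows "add a z = Some a"
proof -
  have zE: "z\<in>E" and uE: "u\<in>E" using pea_zE[OF p] pea_uE[OF p] by auto
  obtain e where e: "e\<in>E" "add e a = Some u" using pea_cp[OF p] a by blast
  obtain y where y: "add a z = Some y" "add e y = Some u"
    using pea_assoc1[OF p e(1) a zE e(2) pea_uz(1)[OF p]] by blast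
  have yE: "y\<in>E" using pea_closed[OF p a zE y(1)] .
  have "\<exists>!d. d \<in> E \<and> add e d = Some u" using pea_cp[OF p] e(1) by blast
  then have "y = a" using yE y(2) a e(2) by blast
  then show ?thesis using y by simp
qed

lemma pea_lneutral:
  assumes p: "pea E add z u" and a: "a\<in>E"
  shows "add z a = Some a"
proof -
  have zE: "z\<in>E" and uE: "u\<in>E" using pea_zE[OF p] pea_uE[OF p] by auto
  obtain d where d: "d\<in>E" "add a d = Some u" using pea_cp[OF p] a by blast
  obtain x where x: "add z a = Some x" "add x d = Some u"
    using pea_assoc2[OF p zE a d(1) d(2) pea_uz(2)[OF p]] by blast
  have xE: "x\<in>E" using pea_closed[OF p zE a x(1)] .
  have "\<exists>!e. e \<in> E \<and> add e d = Some u" using pea_cp[OF p] d(1) by blast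
  then have "x = a" using xE x(2) a d(2) by blast
  then show ?thesis using x by simp
qed

lemma sm_zero:
  assumes p: "pea E add z u" and s: "signed_measure E add s"
  shows "s z = 0"
proof -
  have zE: "z\<in>E" and uE: "u\<in>E" using pea_zE[OF p] pea_uE[OF p] by auto
  have "s u = s u + s z" using s pea_uz(1)[OF p] uE zE unfolding signed_measure_def by blast
  then show ?thesis by simp
qed

lemma pm_cong:
  assumes p: "pea E add z u" and "pea_measure E add f" and "\<forall>a\<in>E. f a = g a"
  shows "pea_measure E add g"
  using assms unfolding pea_measure_def signed_measure_def
  by (metis pea_closed[OF p])

lemma sm_diff: "signed_measure E add f \<Longrightarrow> signed_measure E add g \<Longrightarrow> signed_measure E add (\<lambda>a. f a - g a)"
  unfolding signed_measure_def by auto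

lemma sm_plus: "signed_measure E add f \<Longrightarrow> signed_measure E add g \<Longrightarrow> signed_measure E add (\<lambda>a. f a + g a)"
  unfolding signed_measure_def by auto

lemma sm_scale: "signed_measure E add f \<Longrightarrow> signed_measure E add (\<lambda>a. c * f a)"
  unfolding signed_measure_def by (auto simp: algebra_simps)

lemma pm_plus: "pea_measure E add f \<Longrightarrow> pea_measure E add g \<Longrightarrow> pea_measure E add (\<lambda>a. f a + g a)"
  unfolding pea_measure_def using sm_plus by (metis add_nonneg_nonneg)

lemma pm_zero: "pea_measure E add (\<lambda>a. 0)"
  unfolding pea_measure_def signed_measure_def by auto

lemma leJ_antisym:
  assumes "leJ E add f g" "leJ E add g f" "a\<in>E" shows "f a = g a"
  using assms unfolding leJ_def pea_measure_def by force


lemma rdp_use: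
  assumes "RDP E add" "a1\<in>E" "a2\<in>E" "b1\<in>E" "b2\<in>E" "add a1 a2 = Some c" "add b1 b2 = Some c"
  shows "\<exists>d1\<in>E. \<exists>d2\<in>E. \<exists>d3\<in>E. \<exists>d4\<in>E.
           add d1 d2 = Some a1 \<and> add d3 d4 = Some a2 \<and>
           add d1 d3 = Some b1 \<and> add d2 d4 = Some b2"
proof -
  have "\<forall>a1\<in>E. \<forall>a2\<in>E. \<forall>b1\<in>E. \<forall>b2\<in>E.
        add a1 a2 \<noteq> None \<and> add a1 a2 = add b1 b2 \<longrightarrow>
        (\<exists>d1\<in>E. \<exists>d2\<in>E. \<exists>d3\<in>E. \<exists>d4\<in>E.
           add d1 d2 = Some a1 \<and> add d3 d4 = Some a2 \<and>
           add d1 d3 = Some b1 \<and> add d2 d4 = Some b2)" using assms(1) unfolding RDP_def .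
  then show ?thesis using assms(2-7) by simp
qed

lemma meet_exists:
  assumes p: "pea E add z u" and r: "RDP E add"
    and m1: "pea_measure E add s1" and m2: "pea_measure E add s2"
  shows "\<exists>m. is_infJ E add m {s1, s2}"
proof -
  have zE: "z\<in>E" using pea_zE[OF p] .
  have sm1: "signed_measure E add s1" and sm2: "signed_measure E add s2"
    and p1: "\<And>a. a\<in>E \<Longrightarrow> 0 \<le> s1 a" and p2: "\<And>a. a\<in>E \<Longrightarrow> 0 \<le> s2 a"
    using m1 m2 unfolding pea_measure_def by auto
  have ad1: "\<And>a b c. a\<in>E \<Longrightarrow> b\<in>E \<Longrightarrow> add a b = Some c \<Longrightarrow> s1 c = s1 a + s1 b"
    using sm1 unfolding signed_measure_def by blast
  have ad2: "\<And>a b c. a\<in>E \<Longrightarrow> b\<in>E \<Longrightarrow> add a b = Some c \<Longrightarrow> s2 c = s2 a + s2 b"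
    using sm2 unfolding signed_measure_def by blast
  have z1: "s1 z = 0" using sm_zero[OF p sm1] .
  have z2: "s2 z = 0" using sm_zero[OF p sm2] .
  define D where "D a = {s1 a1 + s2 a2 | a1 a2. a1\<in>E \<and> a2\<in>E \<and> add a1 a2 = Some a}" for a
  define m where "m a = Inf (D a)" for a
  have Din: "s1 a1 + s2 a2 \<in> D a" if "a1\<in>E" "a2\<in>E" "add a1 a2 = Some a" for a1 a2 a
    using that unfolding D_def by blast
  have Dne: "D a \<noteq> {}" if "a\<in>E" for a
    using Din[OF that zE pea_rneutral[OF p that]] by blast
  have Dbdd: "bdd_below (D a)" for a
    unfolding D_def bdd_below_def using p1 p2 by (intro exI[of _ 0]) (auto intro: add_nonneg_nonneg)
  have mle: "m a \<le> s1 a1 + s2 a2" if "a1\<in>E" "a2\<in>E" "add a1 a2 = Some a" for a1 a2 a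
    unfolding m_def by (rule cInf_lower[OF Din[OF that] Dbdd])
  have mge: "c \<le> m a" if "a\<in>E" "\<And>a1 a2. a1\<in>E \<Longrightarrow> a2\<in>E \<Longrightarrow> add a1 a2 = Some a \<Longrightarrow> c \<le> s1 a1 + s2 a2" for a c
    unfolding m_def using Dne[OF that(1)] that(2) unfolding D_def by (intro cInf_greatest) auto
  have mnn: "0 \<le> m a" if "a\<in>E" for a
    using mge[OF that] p1 p2 by (meson add_nonneg_nonneg)
  have m_s1: "m a \<le> s1 a" if "a\<in>E" for a
    using mle[OF that zE pea_rneutral[OF p that]] z2 by simp
  have m_s2: "m a \<le> s2 a" if "a\<in>E" for a
    using mle[OF zE that pea_lneutral[OF p that]] z1 by simp
  have madd: "m c = m a + m b" if a: "a\<in>E" and b: "b\<in>E" and c: "add a b = Some c" for a b c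
  proof -
    have cE: "c\<in>E" using pea_closed[OF p a b c] .
    have ge: "m a + m b \<le> m c"
    proof (rule mge[OF cE])
      fix c1 c2 assume c1: "c1\<in>E" and c2: "c2\<in>E" and cc: "add c1 c2 = Some c"
      obtain d1 d2 d3 d4 where d: "d1\<in>E" "d2\<in>E" "d3\<in>E" "d4\<in>E"
        "add d1 d2 = Some c1" "add d3 d4 = Some c2" "add d1 d3 = Some a" "add d2 d4 = Some b"
        using rdp_use[OF r c1 c2 a b cc c] by blast
      have "m a \<le> s1 d1 + s2 d3" using mle[OF d(1) d(3) d(7)] .
      moreover have "m b \<le> s1 d2 + s2 d4" using mle[OF d(2) d(4) d(8)] .
      moreover have "s1 c1 = s1 d1 + s1 d2" using ad1[OF d(1) d(2) d(5)] .
      moreover have "s2 c2 = s2 d3 + s2 d4" using ad2[OF d(3) d(4) d(6)] .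
      ultimately show "m a + m b \<le> s1 c1 + s2 c2" by linarith
    qed
    have key: "m c \<le> (s1 a1 + s2 a2) + (s1 b1 + s2 b2)"
      if a12: "a1\<in>E" "a2\<in>E" "add a1 a2 = Some a" and b12: "b1\<in>E" "b2\<in>E" "add b1 b2 = Some b"
      for a1 a2 b1 b2
    proof -
      obtain y where y: "add a2 b = Some y" "add a1 y = Some c"
        using pea_assoc1[OF p a12(1) a12(2) b a12(3) c] by blast
      have yE: "y\<in>E" using pea_closed[OF p a12(2) b y(1)] .
      obtain x where x: "add a2 b1 = Some x" "add x b2 = Some y"
        using pea_assoc2[OF p a12(2) b12(1) b12(2) b12(3) y(1)] by blast
      have xE: "x\<in>E" using pea_closed[OF p a12(2) b12(1) x(1)] .
      obtain d where d: "d\<in>E" "add d a2 = Some x"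
        using pea_comm3[OF p a12(2) b12(1) x(1)] by blast
      obtain v where v: "add a2 b2 = Some v" "add d v = Some y"
        using pea_assoc1[OF p d(1) a12(2) b12(2) d(2) x(2)] by blast
      have vE: "v\<in>E" using pea_closed[OF p a12(2) b12(2) v(1)] .
      obtain t where t: "add a1 d = Some t" "add t v = Some c"
        using pea_assoc2[OF p a12(1) d(1) vE v(2) y(2)] by blast
      have tE: "t\<in>E" using pea_closed[OF p a12(1) d(1) t(1)] .
      have "m c \<le> s1 t + s2 v" using mle[OF tE vE t(2)] .
      moreover have "s1 t = s1 a1 + s1 d" using ad1[OF a12(1) d(1) t(1)] .
      moreover have "s2 v = s2 a2 + s2 b2" using ad2[OF a12(2) b12(2) v(1)] .
      moreover have "s1 x = s1 d + s1 a2" using ad1[OF d(1) a12(2) d(2)] .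
      moreover have "s1 x = s1 a2 + s1 b1" using ad1[OF a12(2) b12(1) x(1)] .
      ultimately show ?thesis by linarith
    qed
    have le: "m c \<le> m a + m b"
    proof -
      have "m c - m a \<le> m b"
      proof (rule mge[OF b])
        fix b1 b2 assume b12: "b1\<in>E" "b2\<in>E" "add b1 b2 = Some b"
        have "m c - (s1 b1 + s2 b2) \<le> m a"
        proof (rule mge[OF a])
          fix a1 a2 assume a12: "a1\<in>E" "a2\<in>E" "add a1 a2 = Some a"
          show "m c - (s1 b1 + s2 b2) \<le> s1 a1 + s2 a2" using key[OF a12 b12] by linarith
        qed
        then show "m c - m a \<le> s1 b1 + s2 b2" by linarith
      qed
      then show ?thesis by linarith
    qed
    show ?thesis using ge le by linarith
  qed
  have smm: "signed_measure E add m" unfolding signed_measure_def using madd by blast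
  have pmm: "pea_measure E add m" unfolding pea_measure_def using smm mnn by blast
  have mJ: "m \<in> JE E add" unfolding JE_def using smm pmm pm_zero
    by (intro CollectI conjI exI[of _ m] exI[of _ "\<lambda>a. 0"]) auto
  have l1: "leJ E add m s1" unfolding leJ_def pea_measure_def
    using sm_diff[OF sm1 smm] m_s1 by auto
  have l2: "leJ E add m s2" unfolding leJ_def pea_measure_def
    using sm_diff[OF sm2 smm] m_s2 by auto
  have gl: "leJ E add k m" if kJ: "k \<in> JE E add" and k1: "leJ E add k s1" and k2: "leJ E add k s2" for k
  proof -
    have smk: "signed_measure E add k" using kJ unfolding JE_def by blast
    have k1': "k a \<le> s1 a" if "a\<in>E" for a using k1 that unfolding leJ_def pea_measure_def by auto
    have k2': "k a \<le> s2 a" if "a\<in>E" for a using k2 that unfolding leJ_def pea_measure_def by auto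
    have "k a \<le> m a" if aE: "a\<in>E" for a
    proof (rule mge[OF aE])
      fix a1 a2 assume "a1\<in>E" "a2\<in>E" "add a1 a2 = Some a"
      moreover then have "k a = k a1 + k a2" using smk unfolding signed_measure_def by blast
      ultimately show "k a \<le> s1 a1 + s2 a2" using k1' k2' by (smt (verit))
    qed
    then show ?thesis unfolding leJ_def pea_measure_def using sm_diff[OF smm smk] by auto
  qed
  have "is_infJ E add m {s1, s2}" unfolding is_infJ_def using mJ l1 l2 gl by auto
  then show ?thesis by blast
qed


lemma pm_le: "pea_measure E add f \<Longrightarrow> a\<in>E \<Longrightarrow> 0 \<le> f a"
  unfolding pea_measure_def by blast

lemma pm_sm: "pea_measure E add f \<Longrightarrow> signed_measure E add f"
  unfolding pea_measure_def by blast

lemma leJ_val: "leJ E add f g \<Longrightarrow> a\<in>E \<Longrightarrow> f a \<le> g a"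
  unfolding leJ_def pea_measure_def by force

lemma leJ_intro: "signed_measure E add f \<Longrightarrow> signed_measure E add g \<Longrightarrow> (\<And>a. a\<in>E \<Longrightarrow> f a \<le> g a) \<Longrightarrow> leJ E add f g"
  unfolding leJ_def pea_measure_def using sm_diff[of E add g f] by auto

lemma JE_sm: "k \<in> JE E add \<Longrightarrow> signed_measure E add k"
  unfolding JE_def by blast

lemma pm_JE: "pea_measure E add f \<Longrightarrow> f \<in> JE E add"
  unfolding JE_def using pm_zero pm_sm by (intro CollectI conjI exI[of _ f] exI[of _ "\<lambda>a. 0"]) auto

theorem proposition4p3:
  fixes E :: "'a set" and add :: "'a \<Rightarrow> 'a \<Rightarrow> 'a option" and z u :: 'a
    and s1 s2 :: "'a \<Rightarrow> real"
  assumes "pea E add z u" and "RDP E add"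
    and "pea_state E add u s1" and "pea_state E add u s2"
  shows "(pea_state E add u (meetJ E add s1 s2) \<longleftrightarrow> (\<forall>a\<in>E. s1 a = s2 a))
       \<and> ((\<forall>a\<in>E. s1 a = s2 a) \<longleftrightarrow> pea_state E add u (joinJ E add s1 s2))
       \<and> is_infJ E add (meetJ E add s1 s2)
           {(\<lambda>a. l * s1 a + (1 - l) * s2 a) | l::real. 0 \<le> l \<and> l \<le> 1}
       \<and> pea_measure E add (meetJ E add s1 s2)"
proof -
  note p = assms(1)
  have uE: "u\<in>E" using pea_uE[OF p] .
  have m1: "pea_measure E add s1" and m2: "pea_measure E add s2"
    and u1: "s1 u = 1" and u2: "s2 u = 1" using assms(3,4) unfolding pea_state_def by auto
  have sm1: "signed_measure E add s1" and sm2: "signed_measure E add s2" using m1 m2 pm_sm by auto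
  define M where "M = meetJ E add s1 s2"
  have infM: "is_infJ E add M {s1, s2}"
    unfolding M_def meetJ_def using meet_exists[OF p assms(2) m1 m2] by (rule someI_ex)
  have MJ: "M \<in> JE E add" and M1: "leJ E add M s1" and M2: "leJ E add M s2"
    and Mg: "\<And>k. k \<in> JE E add \<Longrightarrow> leJ E add k s1 \<Longrightarrow> leJ E add k s2 \<Longrightarrow> leJ E add k M"
    using infM unfolding is_infJ_def by auto
  have smM: "signed_measure E add M" using JE_sm[OF MJ] .
  have M1v: "M a \<le> s1 a" and M2v: "M a \<le> s2 a" if "a\<in>E" for a
    using leJ_val[OF M1 that] leJ_val[OF M2 that] by auto
  have pmM: "pea_measure E add M"
  proof -
    have "leJ E add (\<lambda>a. 0) M"
      by (rule Mg) (use pm_JE[OF pm_zero] m1 m2 in \<open>auto simp: leJ_def\<close>)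
    then show ?thesis unfolding leJ_def by simp
  qed
  have eq_if_state: "\<forall>a\<in>E. s1 a = s2 a" if st: "pea_state E add u M"
  proof
    fix a assume aE: "a\<in>E"
    have Mu: "M u = 1" using st unfolding pea_state_def by blast
    obtain d where d: "d\<in>E" "add a d = Some u" using pea_cp[OF p] aE by blast
    have "M u = M a + M d" using smM aE d unfolding signed_measure_def by blast
    moreover have "s1 u = s1 a + s1 d" using sm1 aE d unfolding signed_measure_def by blast
    moreover have "s2 u = s2 a + s2 d" using sm2 aE d unfolding signed_measure_def by blast
    ultimately show "s1 a = s2 a" using M1v[OF aE] M2v[OF aE] M1v[OF d(1)] M2v[OF d(1)] Mu u1 u2
      by linarith
  qed
  have state_if_eq: "pea_state E add u M" if eq: "\<forall>a\<in>E. s1 a = s2 a"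
  proof -
    have "leJ E add s1 M"
      by (rule Mg[OF pm_JE[OF m1]]) (use sm1 sm2 eq in \<open>auto intro!: leJ_intro\<close>)
    then have "M u = 1" using M1v[OF uE] leJ_val[of E add s1 M u] uE u1 by force
    then show ?thesis unfolding pea_state_def using pmM by blast
  qed
  have seg: "is_infJ E add M {(\<lambda>a. l * s1 a + (1 - l) * s2 a) | l::real. 0 \<le> l \<and> l \<le> 1}"
    unfolding is_infJ_def
  proof (intro conjI ballI impI)
    show "M \<in> JE E add" using MJ .
  next
    fix k assume "k \<in> {(\<lambda>a. l * s1 a + (1 - l) * s2 a) | l::real. 0 \<le> l \<and> l \<le> 1}"
    then obtain l where l: "0 \<le> l" "l \<le> 1" and k: "k = (\<lambda>a. l * s1 a + (1 - l) * s2 a)" by blast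
    show "leJ E add M k" unfolding k
    proof (rule leJ_intro[OF smM])
      show "signed_measure E add (\<lambda>a. l * s1 a + (1 - l) * s2 a)"
        using sm_plus[OF sm_scale[OF sm1] sm_scale[OF sm2]] .
      fix a assume aE: "a\<in>E"
      have "l * M a \<le> l * s1 a" using M1v[OF aE] l by (simp add: mult_left_mono)
      moreover have "(1-l) * M a \<le> (1-l) * s2 a" using M2v[OF aE] l by (simp add: mult_left_mono)
      ultimately show "M a \<le> l * s1 a + (1 - l) * s2 a" by (simp add: algebra_simps)
    qed
  next
    fix k assume kJ: "k \<in> JE E add"
      and h: "\<forall>s\<in>{(\<lambda>a. l * s1 a + (1 - l) * s2 a) | l::real. 0 \<le> l \<and> l \<le> 1}. leJ E add k s"
    have "(\<lambda>a. 1 * s1 a + (1 - 1) * s2 a) \<in> {(\<lambda>a. l * s1 a + (1 - l) * s2 a) | l::real. 0 \<le> l \<and> l \<le> 1}"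
      by (rule CollectI, rule exI[of _ 1]) simp
    then have "leJ E add k (\<lambda>a. 1 * s1 a + (1 - 1) * s2 a)" using h by blast
    then have k1: "leJ E add k s1" by simp
    have "(\<lambda>a. 0 * s1 a + (1 - 0) * s2 a) \<in> {(\<lambda>a. l * s1 a + (1 - l) * s2 a) | l::real. 0 \<le> l \<and> l \<le> 1}"
      by (rule CollectI, rule exI[of _ 0]) simp
    then have "leJ E add k (\<lambda>a. 0 * s1 a + (1 - 0) * s2 a)" using h by blast
    then have k2: "leJ E add k s2" by simp
    show "leJ E add k M" using Mg[OF kJ k1 k2] .
  qed
  define j where "j a = s1 a + s2 a - M a" for a
  have smj: "signed_measure E add j" unfolding j_def[abs_def]
    using sm_diff[OF sm_plus[OF sm1 sm2] smM] .
  have jJ: "j \<in> JE E add" unfolding JE_def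
    using smj pm_plus[OF m1 m2] pmM unfolding j_def
    by (intro CollectI conjI exI[of _ "\<lambda>a. s1 a + s2 a"] exI[of _ M]) auto
  have supj: "is_supJ E add j {s1, s2}"
    unfolding is_supJ_def
  proof (intro conjI ballI impI)
    show "j \<in> JE E add" using jJ .
  next
    fix k assume "k \<in> {s1, s2}"
    moreover have "leJ E add s1 j"
    proof (rule leJ_intro[OF sm1 smj])
      fix a assume "a\<in>E" then show "s1 a \<le> j a" using M2v unfolding j_def by force
    qed
    moreover have "leJ E add s2 j"
    proof (rule leJ_intro[OF sm2 smj])
      fix a assume "a\<in>E" then show "s2 a \<le> j a" using M1v unfolding j_def by force
    qed
    ultimately show "leJ E add k j" by blast
  next
    fix k assume kJ: "k \<in> JE E add" and h: "\<forall>s\<in>{s1, s2}. leJ E add s k"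
    have h1: "leJ E add s1 k" and h2: "leJ E add s2 k" using h by auto
    have k1: "s1 a \<le> k a" and k2: "s2 a \<le> k a" if "a\<in>E" for a
      using leJ_val[OF h1 that] leJ_val[OF h2 that] by auto
    have smk: "signed_measure E add k" using JE_sm[OF kJ] .
    obtain k1m k2m where km: "pea_measure E add k1m" "pea_measure E add k2m"
      "\<forall>a\<in>E. k a = k1m a - k2m a" using kJ unfolding JE_def by blast
    define k' where "k' a = s1 a + s2 a - k a" for a
    have smk': "signed_measure E add k'" unfolding k'_def[abs_def]
      using sm_diff[OF sm_plus[OF sm1 sm2] smk] .
    have k'J: "k' \<in> JE E add"
    proof -
      have a1: "pea_measure E add (\<lambda>a. s1 a + s2 a + k2m a)" using pm_plus[OF pm_plus[OF m1 m2] km(2)] .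
      have a2: "\<forall>a\<in>E. k' a = s1 a + s2 a + k2m a - k1m a" using km(3) unfolding k'_def by simp
      show ?thesis unfolding JE_def using smk' a1 km(1) a2 by blast
    qed
    have l1: "leJ E add k' s1"
    proof (rule leJ_intro[OF smk' sm1])
      fix a assume "a\<in>E" then show "k' a \<le> s1 a" using k2 unfolding k'_def by force
    qed
    have l2: "leJ E add k' s2"
    proof (rule leJ_intro[OF smk' sm2])
      fix a assume "a\<in>E" then show "k' a \<le> s2 a" using k1 unfolding k'_def by force
    qed
    have lk: "leJ E add k' M" using Mg[OF k'J l1 l2] .
    show "leJ E add j k"
    proof (rule leJ_intro[OF smj smk])
      fix a assume aE: "a\<in>E"
      show "j a \<le> k a" using leJ_val[OF lk aE] unfolding j_def k'_def by linarith
    qed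
  qed
  define J where "J = joinJ E add s1 s2"
  have supJ: "is_supJ E add J {s1, s2}"
    unfolding J_def joinJ_def using supj by (rule someI[where P="\<lambda>m. is_supJ E add m {s1, s2}"])
  have Jj: "J a = j a" if "a\<in>E" for a
  proof -
    have "leJ E add J j" using supJ supj unfolding is_supJ_def by blast
    moreover have "leJ E add j J" using supJ supj unfolding is_supJ_def by blast
    ultimately show ?thesis using leJ_antisym[of E add J j a] that by blast
  qed
  have smJ: "signed_measure E add J" using supJ unfolding is_supJ_def by (blast intro: JE_sm)
  have pmJ: "pea_measure E add J" unfolding pea_measure_def
  proof (intro conjI ballI smJ)
    fix a assume aE: "a\<in>E"
    show "0 \<le> J a" using Jj[OF aE] pm_le[OF m1 aE] pm_le[OF m2 aE] M1v[OF aE] M2v[OF aE]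
      unfolding j_def by linarith
  qed
  have join_eq: "(\<forall>a\<in>E. s1 a = s2 a) \<longleftrightarrow> pea_state E add u J"
  proof
    assume eq: "\<forall>a\<in>E. s1 a = s2 a"
    then have "M u = 1" using state_if_eq unfolding pea_state_def by blast
    then have "J u = 1" using Jj[OF uE] u1 u2 by (simp add: j_def)
    then show "pea_state E add u J" unfolding pea_state_def using pmJ by blast
  next
    assume "pea_state E add u J"
    then have "J u = 1" unfolding pea_state_def by blast
    then have "M u = 1" using Jj[OF uE] u1 u2 by (simp add: j_def)
    then have "pea_state E add u M" unfolding pea_state_def using pmM by blast
    then show "\<forall>a\<in>E. s1 a = s2 a" using eq_if_state by blast
  qed
  show ?thesis
    using eq_if_state state_if_eq join_eq seg pmM unfolding M_def J_def by blast
qed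

end
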